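(* For all integers $n,f$ with $1\le f\le n-1$, $\mathrm{Cons}(n,f)$ is not $C$-reducible to $\mathrm{Cons}(n+1,f)$.
   Context: Model: a finite set of processes runs an asynchronous algorithm communicating by reliable message passing with unbounded delays and speeds; processes fail only by crashing. Time is $\mathcal T=\mathbb N$; a failure pattern $F$ for $\Pi$ is a nondecreasing map $\mathcal T\to2^\Pi$, $Faulty(F)=\bigcup_tF(t)$. A task $T=(P,f)$ consists of a binary agreement problem $P$ (mapping $(F,\vec V)$, $\vec V\in\{0,1\}^\Pi$, to a nonempty $P(F,\vec V)\subseteq\{0,1\}$) and a resiliency degree $f$. An algorithm solves $T$ if in every run with $|Faulty(F)|\le f$ and initial values $\vec V$: every correct process eventually decides, decisions are irrevocable, no two processes decide differently, and decisions lie in $P(F,\vec V)$. Binary Consensus $\mathrm{Cons}(n,f)=(\mathrm{Cons}_{\Pi},f)$ on $\Pi=\{1,\dots,n\}$: $\mathrm{Cons}_\Pi(F,\vec V)=\{v\}$ if all entries of $\vec V$ equal $v$, and $\{0,1\}$ otherwise. Oracles: for $T=(P,f)$ on process set $\Pi'$, $\mathcal O.T$ is a black box with consultants $\Pi'$; its history is a sequence of successive consultations, in each of which every consultant may submit at most one query in $\{0,1\}$ and the oracle returns a common response $d$ with $d\in P(F,\vec V)$ for every $\vec V$ extending the partial query vector (the oracle may use the whole failure pattern, including future crashes), and every correct querier gets the response whenever at least $|\Pi'|-f$ consultants query; $\mathcal O.T$ is the most general such oracle. $C$-reduction: $T_1\le_C T_2$ if there is an algorithm solving $T_1$ whose processes,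 besides message passing, may consult a single oracle $\mathcal O.T_2'$ where $T_2'$ is a renamed copy of $T_2$ whose consultant set contains or is contained in the process set of $T_1$; consultants that are not processes of $T_1$ never query and count as crashed from the start for the oracle (so here, processes $1,\dots,n$ may consult $\mathcal O.\mathrm{Cons}(n+1,f)$ on $\{1,\dots,n+1\}$, process $n+1$ being absent). *)

theory Defs
  imports Main "HOL-Library.Multiset"
begin

text \<open>A failure pattern is a nondecreasing map from time (nat) to sets of processes.
  Processes are natural numbers; the process set of Cons(n,f) is {1..n}.\<close>

definition failure_pattern :: "nat set \<Rightarrow> (nat \<Rightarrow> nat set) \<Rightarrow> bool" where
  "failure_pattern Pi F \<longleftrightarrow> mono F \<and> (\<forall>t. F t \<subseteq> Pi)"

definition Faulty :: "(nat \<Rightarrow> nat set) \<Rightarrow> nat set" where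
  "Faulty F = (\<Union>t. F t)"

text \<open>Binary consensus problem on process set Pi: if all entries of the input vector
  (restricted to Pi) equal v then {v}, otherwise {0,1} (booleans encode 0/1).
  The failure pattern argument is unused, as in the paper.\<close>

definition ConsP :: "nat set \<Rightarrow> (nat \<Rightarrow> nat set) \<Rightarrow> (nat \<Rightarrow> bool) \<Rightarrow> bool set" where
  "ConsP Pi F V = (if \<exists>v. \<forall>i\<in>Pi. V i = v then {V (SOME i. i \<in> Pi)} else UNIV)"

text \<open>Input of a process step: nothing (null receipt), a message from a sender,
  or the response of the oracle to the pending query.\<close>

datatype 'm inp = NoInp | Msg nat 'm | Resp bool

text \<open>A deterministic algorithm: initial state as a function of process id and
  initial value; a step of process p in state s with input i yields the new state,
  the list of messages sent (destination, content) and possibly a query (0/1) to the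
  oracle; dec gives the (possible) decision value of a state.\<close>

record ('s, 'm) algo =
  ini :: "nat \<Rightarrow> bool \<Rightarrow> 's"
  nxt :: "nat \<Rightarrow> 's \<Rightarrow> 'm inp \<Rightarrow> 's"
  out :: "nat \<Rightarrow> 's \<Rightarrow> 'm inp \<Rightarrow> (nat \<times> 'm) list"
  qry :: "nat \<Rightarrow> 's \<Rightarrow> 'm inp \<Rightarrow> bool option"
  dec :: "nat \<Rightarrow> 's \<Rightarrow> bool option"

text \<open>Global configurations.  net: messages in transit (sender, destination, content);
  nq p: number of queries submitted by p (its k-th query belongs to consultation k);
  qv k p: query of consultant p in consultation k; rsp k: the common response of
  consultation k, once the oracle has fixed it; ng p: number of responses received by p.\<close>

record ('s, 'm) cfg =
  st  :: "nat \<Rightarrow> 's"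
  net :: "(nat \<times> nat \<times> 'm) multiset"
  nq  :: "nat \<Rightarrow> nat"
  qv  :: "nat \<Rightarrow> nat \<Rightarrow> bool option"
  rsp :: "nat \<Rightarrow> bool option"
  ng  :: "nat \<Rightarrow> nat"

datatype 'm ev = PStep nat "'m inp" | ORespond nat bool | Idle

definition init_cfg :: "('s, 'm) algo \<Rightarrow> (nat \<Rightarrow> bool) \<Rightarrow> ('s, 'm) cfg" where
  "init_cfg A V = \<lparr> st = (\<lambda>p. ini A p (V p)), net = {#}, nq = (\<lambda>_. 0),
     qv = (\<lambda>_ _. None), rsp = (\<lambda>_. None), ng = (\<lambda>_. 0) \<rparr>"

definition oracle_valid ::
  "nat \<Rightarrow> (nat \<Rightarrow> nat set) \<Rightarrow> ('s, 'm) cfg \<Rightarrow> nat \<Rightarrow> bool \<Rightarrow> bool" where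
  "oracle_valid m F' c k d \<longleftrightarrow>
     (\<forall>V. (\<forall>i\<in>{1..m}. \<forall>b. qv c k i = Some b \<longrightarrow> V i = b) \<longrightarrow> d \<in> ConsP {1..m} F' V)"

text \<open>Enabledness of events at time t, for processes {1..n}, failure pattern F of the
  processes, oracle on consultants {1..m} (consultants above n count as crashed from
  the start).\<close>

definition enabled ::
  "nat \<Rightarrow> nat \<Rightarrow> (nat \<Rightarrow> nat set) \<Rightarrow> nat \<Rightarrow> ('s, 'm) cfg \<Rightarrow> 'm ev \<Rightarrow> bool" where
  "enabled n m F t c e = (case e of
       PStep p i \<Rightarrow> p \<in> {1..n} \<and> p \<notin> F t \<and>
         (case i of NoInp \<Rightarrow> True
                  | Msg q x \<Rightarrow> (q, p, x) \<in># net c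
                  | Resp d \<Rightarrow> ng c p < nq c p \<and> rsp c (ng c p) = Some d)
     | ORespond k d \<Rightarrow> rsp c k = None \<and> (k = 0 \<or> rsp c (k - 1) \<noteq> None) \<and>
         oracle_valid m (\<lambda>t. F t \<union> {n+1..m}) c k d
     | Idle \<Rightarrow> True)"

text \<open>Effect of an event.  A query is registered only if the process has no pending
  query (a consultant submits at most one query per consultation, and consultations
  are successive).\<close>

definition effect :: "('s, 'm) algo \<Rightarrow> ('s, 'm) cfg \<Rightarrow> 'm ev \<Rightarrow> ('s, 'm) cfg" where
  "effect A c e = (case e of
       PStep p i \<Rightarrow>
         (let s = st c p;
              ng' = (case i of Resp _ \<Rightarrow> (ng c)(p := Suc (ng c p)) | _ \<Rightarrow> ng c);
              rcv = (case i of Msg q x \<Rightarrow> {#(q, p, x)#} | _ \<Rightarrow> {#});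
              snt = mset (map (\<lambda>(d, x). (p, d, x)) (out A p s i));
              c1 = c\<lparr> st := (st c)(p := nxt A p s i), net := net c - rcv + snt, ng := ng' \<rparr>
          in (case qry A p s i of
                Some b \<Rightarrow> if ng' p = nq c p
                          then c1\<lparr> qv := (qv c)(nq c p := (qv c (nq c p))(p := Some b)),
                                   nq := (nq c)(p := Suc (nq c p)) \<rparr>
                          else c1
              | None \<Rightarrow> c1))
     | ORespond k d \<Rightarrow> c\<lparr> rsp := (rsp c)(k := Some d) \<rparr>
     | Idle \<Rightarrow> c)"

definition correct :: "nat \<Rightarrow> (nat \<Rightarrow> nat set) \<Rightarrow> nat set" where
  "correct n F = {1..n} - Faulty F"

definition admissible_run ::
  "('s, 'm) algo \<Rightarrow> nat \<Rightarrow> nat \<Rightarrow> nat \<Rightarrow> (nat \<Rightarrow> nat set) \<Rightarrow> (nat \<Rightarrow> bool)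
     \<Rightarrow> (nat \<Rightarrow> ('s, 'm) cfg) \<Rightarrow> (nat \<Rightarrow> 'm ev) \<Rightarrow> bool" where
  "admissible_run A n m g F V \<rho> E \<longleftrightarrow>
     \<rho> 0 = init_cfg A V \<and>
     (\<forall>t. enabled n m F t (\<rho> t) (E t) \<and> \<rho> (Suc t) = effect A (\<rho> t) (E t)) \<and>
     \<comment> \<open>every correct process takes infinitely many steps\<close>
     (\<forall>p\<in>correct n F. \<forall>t. \<exists>t'\<ge>t. \<exists>i. E t' = PStep p i) \<and>
     \<comment> \<open>reliable channels: messages to correct processes are eventually received\<close>
     (\<forall>p\<in>correct n F. \<forall>t q x. (q, p, x) \<in># net (\<rho> t) \<longrightarrow>
         (\<exists>t'\<ge>t. E t' = PStep p (Msg q x))) \<and>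
     \<comment> \<open>oracle liveness: if at least m - g consultants query in consultation k,
        every correct querier of consultation k gets the response\<close>
     (\<forall>k. card {i\<in>{1..m}. \<exists>t. qv (\<rho> t) k i \<noteq> None} \<ge> m - g \<longrightarrow>
        (\<forall>p\<in>correct n F. (\<exists>t. qv (\<rho> t) k p \<noteq> None) \<longrightarrow> (\<exists>t. ng (\<rho> t) p > k)))"

definition solves_Cons_with_oracle ::
  "('s, 'm) algo \<Rightarrow> nat \<Rightarrow> nat \<Rightarrow> nat \<Rightarrow> nat \<Rightarrow> bool" where
  "solves_Cons_with_oracle A n f m g \<longleftrightarrow>
     (\<forall>F V \<rho> E. failure_pattern {1..n} F \<and> card (Faulty F) \<le> f \<and>
        admissible_run A n m g F V \<rho> E \<longrightarrow>
        \<comment> \<open>termination\<close>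
        (\<forall>p\<in>correct n F. \<exists>t. dec A p (st (\<rho> t) p) \<noteq> None) \<and>
        \<comment> \<open>irrevocability\<close>
        (\<forall>p\<in>{1..n}. \<forall>t d. dec A p (st (\<rho> t) p) = Some d \<longrightarrow>
            (\<forall>t'\<ge>t. dec A p (st (\<rho> t') p) = Some d)) \<and>
        \<comment> \<open>agreement\<close>
        (\<forall>p\<in>{1..n}. \<forall>q\<in>{1..n}. \<forall>t t' d d'. dec A p (st (\<rho> t) p) = Some d \<longrightarrow>
            dec A q (st (\<rho> t') q) = Some d' \<longrightarrow> d = d') \<and>
        \<comment> \<open>validity\<close>
        (\<forall>p\<in>{1..n}. \<forall>t d. dec A p (st (\<rho> t) p) = Some d \<longrightarrow> d \<in> ConsP {1..n} F V))"

text \<open>Cons(n,f) is C-reducible to Cons(n+1,f) via algorithms with state type 's and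
  message type 'm (the theorem quantifies over all such types).\<close>

definition C_reducible_Cons_Cons_succ :: "'s itself \<Rightarrow> 'm itself \<Rightarrow> nat \<Rightarrow> nat \<Rightarrow> bool" where
  "C_reducible_Cons_Cons_succ _ _ n f \<longleftrightarrow>
     (\<exists>A :: ('s, 'm) algo. solves_Cons_with_oracle A n f (n + 1) f)"

end

theory Submission
  imports Defs
begin


lemma effect_PStep:
  "effect A c (PStep p i) =
    (let s = st c p;
         ngp = (case i of Resp _ \<Rightarrow> Suc (ng c p) | _ \<Rightarrow> ng c p);
         rcv = (case i of Msg q x \<Rightarrow> {#(q, p, x)#} | _ \<Rightarrow> {#});
         snt = mset (map (\<lambda>(d, x). (p, d, x)) (out A p s i));
         reg = (qry A p s i \<noteq> None \<and> ngp = nq c p)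
     in c\<lparr> st := (st c)(p := nxt A p s i), net := net c - rcv + snt, ng := (ng c)(p := ngp),
           nq := (if reg then (nq c)(p := Suc (nq c p)) else nq c),
           qv := (if reg then (qv c)(nq c p := (qv c (nq c p))(p := qry A p s i)) else qv c) \<rparr>)"
  by (auto simp: effect_def Let_def split: inp.splits option.splits)

lemma effect_ORespond: "effect A c (ORespond k d) = c\<lparr> rsp := (rsp c)(k := Some d) \<rparr>"
  by (simp add: effect_def)

lemma effect_Idle: "effect A c Idle = c"
  by (simp add: effect_def)

lemma mset_comm:
  assumes "rp + rq \<subseteq># M"
  shows "M - rp + sp - rq + sq = M - rq + sq - rp + sp"
proof -
  obtain M' where M: "M = M' + rp + rq" using assms
    by (metis subset_mset.add_diff_inverse add.commute add.assoc)
  show ?thesis unfolding M by (simp add: add.commute add.left_commute)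
qed

definition rcvd :: "nat \<Rightarrow> 'm inp \<Rightarrow> (nat \<times> nat \<times> 'm) multiset" where
  "rcvd p i = (case i of Msg q x \<Rightarrow> {#(q, p, x)#} | _ \<Rightarrow> {#})"

locale sys =
  fixes A :: "('s, 'm) algo" and nL :: nat
  assumes nL_pos: "1 \<le> nL"
begin

abbreviation L where "L \<equiv> {1..nL}"

definition cls_en :: "('s, 'm) cfg \<Rightarrow> 'm ev \<Rightarrow> bool" where
  "cls_en c e = (case e of
      PStep p i \<Rightarrow> p \<in> L \<and> (case i of NoInp \<Rightarrow> True
                  | Msg q x \<Rightarrow> (q, p, x) \<in># net c
                  | Resp d \<Rightarrow> ng c p < nq c p \<and> rsp c (ng c p) = Some d)
    | ORespond k d \<Rightarrow> rsp c k = None \<and> (k = 0 \<or> rsp c (k - 1) \<noteq> None) \<and>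
         (\<forall>i\<in>L. qv c k i \<noteq> None) \<and> d = (\<exists>i\<in>L. qv c k i = Some True)
    | Idle \<Rightarrow> True)"

definition Inv :: "('s, 'm) cfg \<Rightarrow> bool" where
  "Inv c \<longleftrightarrow> (\<forall>p j. (qv c j p \<noteq> None) = (j < nq c p)) \<and> (\<forall>p. ng c p \<le> nq c p) \<and>
     (\<forall>p j. j < ng c p \<longrightarrow> rsp c j \<noteq> None) \<and>
     (\<forall>k j. rsp c k \<noteq> None \<longrightarrow> j < k \<longrightarrow> rsp c j \<noteq> None) \<and>
     (\<forall>j p. qv c j p \<noteq> None \<longrightarrow> p \<in> L)"

lemma Inv_init: "Inv (init_cfg A V)"
  by (simp add: Inv_def init_cfg_def)

lemma Inv_step:
  assumes "Inv c" "cls_en c e"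
  shows "Inv (effect A c e)"
proof (cases e)
  case (PStep p i)
  have pL: "p \<in> L" using assms(2) by (simp add: cls_en_def PStep)
  have resp: "\<And>d. i = Resp d \<Longrightarrow> ng c p < nq c p \<and> rsp c (ng c p) = Some d"
    using assms(2) by (simp add: cls_en_def PStep)
  show ?thesis using assms(1) pL
    apply (simp add: PStep effect_PStep Let_def Inv_def)
    apply (cases i)
      apply (auto split: if_splits)
    using resp less_Suc_eq apply (auto, (metis option.distinct(1) less_Suc_eq)+)
    done
next
  case (ORespond k d)
  then show ?thesis using assms
    apply (simp add: effect_ORespond Inv_def cls_en_def)
    by (metis One_nat_def Suc_pred less_Suc_eq_0_disj less_antisym not_less_eq)
next
  case Idle
  then show ?thesis using assms by (simp add: effect_Idle)
qed


definition same_agent :: "'m ev \<Rightarrow> 'm ev \<Rightarrow> bool" where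
  "same_agent e1 e2 \<longleftrightarrow> (\<exists>p i j. e1 = PStep p i \<and> e2 = PStep p j) \<or>
     (\<exists>k d k' d'. e1 = ORespond k d \<and> e2 = ORespond k' d')"

lemma sub2: "x \<in># M \<Longrightarrow> y \<in># M \<Longrightarrow> x \<noteq> y \<Longrightarrow> add_mset y {#x#} \<subseteq># M"
  by (simp add: insert_subset_eq_iff in_diff_count)

definition ngn :: "'m inp \<Rightarrow> nat \<Rightarrow> nat" where
  "ngn i g = (case i of Resp _ \<Rightarrow> Suc g | _ \<Rightarrow> g)"

definition regd :: "nat \<Rightarrow> ('s, 'm) cfg \<Rightarrow> 'm inp \<Rightarrow> bool" where
  "regd p c i = (qry A p (st c p) i \<noteq> None \<and> ngn i (ng c p) = nq c p)"

definition snt :: "nat \<Rightarrow> 's \<Rightarrow> 'm inp \<Rightarrow> (nat \<times> nat \<times> 'm) multiset" where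
  "snt p s i = mset (map (\<lambda>(d, x). (p, d, x)) (out A p s i))"

lemma eff_fields:
  "st (effect A c (PStep p i)) = (st c)(p := nxt A p (st c p) i)"
  "net (effect A c (PStep p i)) = net c - rcvd p i + snt p (st c p) i"
  "ng (effect A c (PStep p i)) = (ng c)(p := ngn i (ng c p))"
  "nq (effect A c (PStep p i)) = (if regd p c i then (nq c)(p := Suc (nq c p)) else nq c)"
  "qv (effect A c (PStep p i)) = (if regd p c i then (qv c)(nq c p := (qv c (nq c p))(p := qry A p (st c p) i)) else qv c)"
  "rsp (effect A c (PStep p i)) = rsp c"
  "cfg.more (effect A c (PStep p i)) = cfg.more c"
  by (simp_all add: effect_PStep Let_def rcvd_def ngn_def regd_def snt_def)

lemma eff_fields_O:
  "st (effect A c (ORespond k d)) = st c"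
  "net (effect A c (ORespond k d)) = net c"
  "ng (effect A c (ORespond k d)) = ng c"
  "nq (effect A c (ORespond k d)) = nq c"
  "qv (effect A c (ORespond k d)) = qv c"
  "rsp (effect A c (ORespond k d)) = (rsp c)(k := Some d)"
  "cfg.more (effect A c (ORespond k d)) = cfg.more c"
  by (simp_all add: effect_ORespond)

lemma regd_other: "p \<noteq> q \<Longrightarrow> regd p (effect A c (PStep q j)) i = regd p c i"
  by (simp add: regd_def eff_fields)

lemma comm_PP:
  assumes "cls_en c (PStep p i)" "cls_en c (PStep q j)" "p \<noteq> q"
  shows "cls_en (effect A c (PStep p i)) (PStep q j) \<and>
    effect A (effect A c (PStep p i)) (PStep q j) = effect A (effect A c (PStep q j)) (PStep p i)"
proof -
  have net: "rcvd p i + rcvd q j \<subseteq># net c"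
    using assms by (auto simp: cls_en_def rcvd_def sub2 split: inp.splits)
  have en: "cls_en (effect A c (PStep p i)) (PStep q j)"
    using assms by (auto simp: cls_en_def effect_PStep Let_def in_diff_count split: inp.splits)
  have eq: "effect A (effect A c (PStep p i)) (PStep q j) = effect A (effect A c (PStep q j)) (PStep p i)"
    using assms(3) mset_comm[OF net]
    apply (intro cfg.equality)
    by (simp_all add: eff_fields regd_other assms(3) assms(3)[symmetric] fun_upd_twist)
  show ?thesis using en eq by simp
qed

lemma Inv_qv: "Inv c \<Longrightarrow> (qv c j p \<noteq> None) = (j < nq c p)"
  by (simp add: Inv_def)

lemma comm_PO:
  assumes inv: "Inv c" and e1: "cls_en c (PStep p i)" and e2: "cls_en c (ORespond k d)"
  shows "cls_en (effect A c (PStep p i)) (ORespond k d) \<and> cls_en (effect A c (ORespond k d)) (PStep p i) \<and>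
    effect A (effect A c (PStep p i)) (ORespond k d) = effect A (effect A c (ORespond k d)) (PStep p i)"
proof -
  have pL: "p \<in> L" using e1 by (simp add: cls_en_def)
  have qk: "qv c k p \<noteq> None" using e2 pL by (simp add: cls_en_def)
  hence kl: "k < nq c p" using Inv_qv[OF inv] by simp
  have "k \<noteq> nq c p" using kl by simp
  hence qvk: "qv (effect A c (PStep p i)) k = qv c k"
    by (simp add: eff_fields)
  have en1: "cls_en (effect A c (PStep p i)) (ORespond k d)"
    using e2 unfolding cls_en_def ev.case qvk eff_fields(6) by simp
  have en2: "cls_en (effect A c (ORespond k d)) (PStep p i)"
    using e1 e2 by (auto simp: cls_en_def eff_fields_O split: inp.splits)
  have eq: "effect A (effect A c (PStep p i)) (ORespond k d) = effect A (effect A c (ORespond k d)) (PStep p i)"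
    apply (intro cfg.equality)
    by (simp_all add: eff_fields eff_fields_O regd_def)
  show ?thesis using en1 en2 eq by simp
qed

lemma oracle_unique:
  assumes inv: "Inv c" and "cls_en c (ORespond k d)" "cls_en c (ORespond k' d')"
  shows "k = k' \<and> d = d'"
proof -
  have dc: "\<And>a b. rsp c a \<noteq> None \<Longrightarrow> b < a \<Longrightarrow> rsp c b \<noteq> None" using inv by (simp add: Inv_def)
  have "k = k'"
  proof (rule ccontr)
    assume "k \<noteq> k'"
    then consider "k < k'" | "k' < k" by linarith
    then show False
    proof cases
      case 1
      have a: "rsp c (k' - 1) \<noteq> None" "rsp c k = None" using 1 assms(2,3) by (auto simp: cls_en_def)
      show ?thesis
      proof (cases "k = k' - 1")
        case True then show ?thesis using a by simp
      next
        case False then show ?thesis using a dc[of "k' - 1" k] 1 by simp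
      qed
    next
      case 2
      have a: "rsp c (k - 1) \<noteq> None" "rsp c k' = None" using 2 assms(2,3) by (auto simp: cls_en_def)
      show ?thesis
      proof (cases "k' = k - 1")
        case True then show ?thesis using a by simp
      next
        case False then show ?thesis using a dc[of "k - 1" k'] 2 by simp
      qed
    qed
  qed
  then show ?thesis using assms(2,3) by (simp add: cls_en_def)
qed

lemma comm:
  assumes inv: "Inv c" and e1: "cls_en c e1" and e2: "cls_en c e2" and na: "\<not> same_agent e1 e2"
  shows "cls_en (effect A c e1) e2 \<and> effect A (effect A c e1) e2 = effect A (effect A c e2) e1"
proof (cases e1)
  case (PStep p i)
  show ?thesis
  proof (cases e2)
    case (PStep q j)
    then show ?thesis using comm_PP[of c p i q j] e1 e2 na \<open>e1 = PStep p i\<close> by (auto simp: same_agent_def)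
  next
    case (ORespond k d)
    then show ?thesis using comm_PO[OF inv, of p i k d] e1 e2 \<open>e1 = PStep p i\<close> by auto
  next
    case Idle
    then show ?thesis by (simp add: effect_Idle cls_en_def)
  qed
next
  case (ORespond k d)
  show ?thesis
  proof (cases e2)
    case (PStep q j)
    then show ?thesis using comm_PO[OF inv, of q j k d] e1 e2 \<open>e1 = ORespond k d\<close> by auto
  next
    case (ORespond k' d')
    then show ?thesis using na \<open>e1 = ORespond k d\<close> by (auto simp: same_agent_def)
  next
    case Idle
    then show ?thesis by (simp add: effect_Idle cls_en_def)
  qed
next
  case Idle
  then show ?thesis using e2 by (simp add: effect_Idle)
qed

lemma persist:
  assumes inv: "Inv c" and e: "cls_en c e" and e': "cls_en c e'" and ne: "e' \<noteq> e"
  shows "cls_en (effect A c e') e"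
proof (cases "same_agent e' e")
  case False
  then show ?thesis using comm[OF inv e' e] by simp
next
  case True
  then consider (P) p i j where "e' = PStep p i" "e = PStep p j" | (O) k d k' d' where "e' = ORespond k d" "e = ORespond k' d'"
    by (auto simp: same_agent_def)
  then show ?thesis
  proof cases
    case P
    show ?thesis
    proof (cases j)
      case NoInp
      then show ?thesis using P e by (simp add: cls_en_def)
    next
      case (Msg q x)
      then show ?thesis using P e ne
        by (auto simp: cls_en_def eff_fields rcvd_def in_diff_count split: inp.splits)
    next
      case (Resp d)
      have "\<not> (\<exists>d'. i = Resp d')"
        using P e e' ne Resp by (auto simp: cls_en_def)
      then show ?thesis using P e Resp
        by (auto simp: cls_en_def eff_fields ngn_def split: inp.splits)
    qed
  next
    case O
    then show ?thesis using oracle_unique[OF inv] e e' ne by blast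
  qed
qed

end


context sys begin

fun exec :: "('s, 'm) cfg \<Rightarrow> 'm ev list \<Rightarrow> ('s, 'm) cfg" where
  "exec c [] = c"
| "exec c (e # es) = exec (effect A c e) es"

fun sok :: "('s, 'm) cfg \<Rightarrow> 'm ev list \<Rightarrow> bool" where
  "sok c [] = True"
| "sok c (e # es) = (cls_en c e \<and> sok (effect A c e) es)"

lemma exec_append[simp]: "exec c (xs @ ys) = exec (exec c xs) ys"
  by (induction xs arbitrary: c) auto

lemma sok_append[simp]: "sok c (xs @ ys) = (sok c xs \<and> sok (exec c xs) ys)"
  by (induction xs arbitrary: c) auto

lemma Inv_exec: "Inv c \<Longrightarrow> sok c xs \<Longrightarrow> Inv (exec c xs)"
  by (induction xs arbitrary: c) (auto simp: Inv_step)

lemma same_agent_sym: "same_agent e1 e2 = same_agent e2 e1"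
  unfolding same_agent_def by blast

lemma comm_list:
  assumes "Inv c" "sok c xs" "\<forall>e'\<in>set xs. \<not> same_agent e e'" "cls_en c e"
  shows "sok (effect A c e) xs \<and> cls_en (exec c xs) e \<and> exec (effect A c e) xs = effect A (exec c xs) e"
  using assms
proof (induction xs arbitrary: c)
  case Nil
  then show ?case by simp
next
  case (Cons e' xs)
  have e': "cls_en c e'" and r: "sok (effect A c e') xs" using Cons.prems by auto
  have na: "\<not> same_agent e e'" "\<not> same_agent e' e" using Cons.prems same_agent_sym by auto
  have c1: "cls_en (effect A c e) e' \<and> effect A (effect A c e) e' = effect A (effect A c e') e"
    using comm[OF Cons.prems(1) Cons.prems(4) e' na(1)] .
  have c2: "cls_en (effect A c e') e"
    using comm[OF Cons.prems(1) e' Cons.prems(4) na(2)] by simp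
  have IH: "sok (effect A (effect A c e') e) xs \<and> cls_en (exec (effect A c e') xs) e \<and>
     exec (effect A (effect A c e') e) xs = effect A (exec (effect A c e') xs) e"
    using Cons.IH[OF Inv_step[OF Cons.prems(1) e'] r] Cons.prems(3) c2 by simp
  show ?case using IH c1 by simp
qed

lemma persist_list:
  assumes "Inv c" "sok c xs" "e \<notin> set xs" "cls_en c e"
  shows "cls_en (exec c xs) e"
  using assms
proof (induction xs arbitrary: c)
  case Nil then show ?case by simp
next
  case (Cons e' xs)
  then show ?case using persist[OF Cons.prems(1) Cons.prems(4), of e'] Inv_step[OF Cons.prems(1)] by auto
qed

definition sim :: "nat \<Rightarrow> ('s, 'm) cfg \<Rightarrow> ('s, 'm) cfg \<Rightarrow> bool" where
  "sim j c c' \<longleftrightarrow> (\<forall>q. q \<noteq> j \<longrightarrow> st c q = st c' q) \<and> net c = net c' \<and> ng c = ng c' \<and>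
     nq c = nq c' \<and> qv c = qv c' \<and> rsp c = rsp c'"

definition notp :: "nat \<Rightarrow> 'm ev \<Rightarrow> bool" where
  "notp j e \<longleftrightarrow> (\<forall>i. e \<noteq> PStep j i)"

lemma sim_step:
  assumes "sim j c c'" "cls_en c e" "notp j e"
  shows "cls_en c' e \<and> sim j (effect A c e) (effect A c' e)"
proof (cases e)
  case (PStep p i)
  have pj: "p \<noteq> j" using assms(3) PStep by (auto simp: notp_def)
  have s: "st c p = st c' p" using assms(1) pj by (simp add: sim_def)
  have en: "cls_en c' e" using assms(1,2) PStep by (auto simp: sim_def cls_en_def split: inp.splits)
  have "sim j (effect A c e) (effect A c' e)"
    using assms(1) s PStep unfolding sim_def by (simp add: eff_fields regd_def)
  then show ?thesis using en by simp
next
  case (ORespond k d)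
  then show ?thesis using assms by (simp add: sim_def cls_en_def eff_fields_O)
next
  case Idle
  then show ?thesis using assms by (simp add: effect_Idle cls_en_def)
qed

lemma sim_list:
  assumes "sim j c c'" "sok c xs" "\<forall>e\<in>set xs. notp j e"
  shows "sok c' xs \<and> sim j (exec c xs) (exec c' xs)"
  using assms
proof (induction xs arbitrary: c c')
  case Nil then show ?case by simp
next
  case (Cons e xs)
  then show ?case using sim_step[OF Cons.prems(1), of e] by auto
qed

definition reach :: "('s, 'm) cfg \<Rightarrow> ('s, 'm) cfg \<Rightarrow> bool" where
  "reach c c' \<longleftrightarrow> (\<exists>xs. sok c xs \<and> exec c xs = c')"

lemma reach_refl: "reach c c"
  unfolding reach_def by (rule exI[of _ "[]"]) simp

lemma reach_trans: "reach a b \<Longrightarrow> reach b c \<Longrightarrow> reach a c"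
  unfolding reach_def by (metis sok_append exec_append)

lemma reach_step: "cls_en c e \<Longrightarrow> reach c (effect A c e)"
  unfolding reach_def by (rule exI[of _ "[e]"]) simp

end


locale flp = sys A nL for A :: "('s, 'm) algo" and nL :: nat +
  fixes n f :: nat
  assumes f1: "1 \<le> f" and fn: "f \<le> n - 1" and solv: "solves_Cons_with_oracle A n f (n + 1) f"
    and nLdef: "nL = n + 1 - f"
begin

abbreviation D where "D \<equiv> {nL + 1..n}"

definition msgset :: "('s, 'm) cfg \<Rightarrow> nat \<Rightarrow> (nat \<times> 'm) set" where
  "msgset c p = {(q, x). (q, p, x) \<in># net c}"

lemma finite_msgset: "finite (msgset c p)"
proof -
  have "msgset c p \<subseteq> (\<lambda>(q, d, x). (q, x)) ` set_mset (net c)"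
    unfolding msgset_def by force
  then show ?thesis by (rule finite_subset) simp
qed

definition msg_obl :: "('s, 'm) cfg \<Rightarrow> nat \<Rightarrow> 'm ev list" where
  "msg_obl c p = map (\<lambda>(q, x). PStep p (Msg q x)) (SOME xs. set xs = msgset c p)"

lemma set_msg_obl: "set (msg_obl c p) = (\<lambda>(q, x). PStep p (Msg q x)) ` msgset c p"
proof -
  have "set (SOME xs. set xs = msgset c p) = msgset c p"
    by (rule someI_ex) (simp add: finite_list finite_msgset)
  then show ?thesis unfolding msg_obl_def by simp
qed

definition resp_obl :: "('s, 'm) cfg \<Rightarrow> nat \<Rightarrow> 'm ev list" where
  "resp_obl c p = (if ng c p < nq c p \<and> rsp c (ng c p) \<noteq> None
     then [PStep p (Resp (the (rsp c (ng c p))))] else [])"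

definition oo :: "('s, 'm) cfg \<Rightarrow> 'm ev" where
  "oo c = (SOME e. \<exists>k d. e = ORespond k d \<and> cls_en c e)"

definition oracle_obl :: "('s, 'm) cfg \<Rightarrow> 'm ev list" where
  "oracle_obl c = (if \<exists>k d. cls_en c (ORespond k d) then [oo c] else [])"

definition oblig :: "nat set \<Rightarrow> ('s, 'm) cfg \<Rightarrow> 'm ev list" where
  "oblig P c = oracle_obl c @
     concat (map (\<lambda>p. resp_obl c p @ msg_obl c p @ [PStep p NoInp]) (sorted_list_of_set P))"

definition okP :: "nat set \<Rightarrow> 'm ev \<Rightarrow> bool" where
  "okP P e \<longleftrightarrow> (\<forall>p i. e = PStep p i \<longrightarrow> p \<in> P)"

lemma oo_en: "cls_en c (ORespond k d) \<Longrightarrow> (\<exists>k d. oo c = ORespond k d \<and> cls_en c (oo c))"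
  unfolding oo_def by (rule someI_ex) auto

lemma oblig_set:
  assumes "finite P"
  shows "set (oblig P c) = set (oracle_obl c) \<union> (\<Union>p\<in>P. set (resp_obl c p) \<union> set (msg_obl c p) \<union> {PStep p NoInp})"
  using assms by (auto simp: oblig_def)

lemma oblig_ok:
  assumes "P \<subseteq> L" "e \<in> set (oblig P c)"
  shows "okP P e \<and> cls_en c e"
proof -
  have fP: "finite P" using assms(1) finite_subset by blast
  show ?thesis using assms(2) assms(1) unfolding oblig_set[OF fP]
    apply (auto simp: oracle_obl_def resp_obl_def set_msg_obl msgset_def okP_def cls_en_def split: if_splits)
    using oo_en apply (fastforce simp: cls_en_def)+
    done
qed

fun mstep :: "nat set \<Rightarrow> (('s, 'm) cfg \<Rightarrow> 'm ev \<Rightarrow> 'm ev list) \<Rightarrow>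
    ('s, 'm) cfg \<times> 'm ev list \<times> 'm ev list \<Rightarrow> ('s, 'm) cfg \<times> 'm ev list \<times> 'm ev list" where
  "mstep P X (c, e # pend, obl) = (effect A c e, pend, obl)"
| "mstep P X (c, [], e # obl) = (c, if cls_en c e then X c e else [], obl)"
| "mstep P X (c, [], []) = (c, [], oblig P c)"

fun memit :: "('s, 'm) cfg \<times> 'm ev list \<times> 'm ev list \<Rightarrow> 'm ev" where
  "memit (c, e # pend, obl) = e"
| "memit (c, [], obl) = Idle"

lemma fst_mstep: "fst (mstep P X s) = effect A (fst s) (memit s)"
  by (cases s; cases "fst (snd s)"; cases "snd (snd s)") (auto simp: effect_Idle)

end

locale runctx = flp A nL n f for A :: "('s, 'm) algo" and nL n f +
  fixes V :: "nat \<Rightarrow> bool" and \<sigma> :: "'m ev list" and P :: "nat set"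
    and X :: "('s, 'm) cfg \<Rightarrow> 'm ev \<Rightarrow> 'm ev list" and I :: "('s, 'm) cfg \<Rightarrow> bool"
  assumes sig: "sok (init_cfg A V) \<sigma>" and PL: "P \<subseteq> L" and cardP: "card (L - P) \<le> 1"
    and HX: "\<And>c e. Inv c \<Longrightarrow> I c \<Longrightarrow> cls_en c e \<Longrightarrow> okP P e \<Longrightarrow>
       sok c (X c e) \<and> (\<forall>e'\<in>set (X c e). okP P e') \<and> I (exec c (X c e)) \<and> X c e \<noteq> [] \<and> last (X c e) = e"
    and I0: "I (exec (init_cfg A V) \<sigma>)"
begin

abbreviation T where "T \<equiv> length \<sigma>"
abbreviation c0 where "c0 \<equiv> exec (init_cfg A V) \<sigma>"

definition S :: "nat \<Rightarrow> ('s, 'm) cfg \<times> 'm ev list \<times> 'm ev list" where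
  "S t = (mstep P X ^^ t) (c0, [], [])"

lemma S_0: "S 0 = (c0, [], [])" by (simp add: S_def)
lemma S_Suc: "S (Suc t) = mstep P X (S t)" by (simp add: S_def)

definition MI :: "('s, 'm) cfg \<times> 'm ev list \<times> 'm ev list \<Rightarrow> bool" where
  "MI s \<longleftrightarrow> (case s of (c, pend, obl) \<Rightarrow> Inv c \<and> sok c pend \<and> (\<forall>e\<in>set pend. okP P e) \<and>
      I (exec c pend) \<and> (\<forall>e\<in>set obl. okP P e))"

lemma Inv_c0: "Inv c0" using Inv_exec[OF Inv_init sig] .

lemma MI_S: "MI (S t)"
proof (induction t)
  case 0
  then show ?case using Inv_c0 I0 by (simp add: S_0 MI_def)
next
  case (Suc t)
  obtain c pend obl where st: "S t = (c, pend, obl)" by (cases "S t")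
  show ?case
  proof (cases pend)
    case (Cons e pend')
    then show ?thesis using Suc st Inv_step by (auto simp: S_Suc MI_def)
  next
    case Nil
    note pn = Nil
    show ?thesis
    proof (cases obl)
      case (Cons e obl')
      show ?thesis
      proof (cases "cls_en c e")
        case True
        then show ?thesis using Suc st pn Cons HX[of c e] by (auto simp: S_Suc MI_def)
      next
        case False
        then show ?thesis using Suc st pn Cons by (auto simp: S_Suc MI_def)
      qed
    next
      case Nil
      then show ?thesis using Suc st pn oblig_ok[OF PL] by (auto simp: S_Suc MI_def)
    qed
  qed
qed

lemma emit_ok: "cls_en (fst (S t)) (memit (S t)) \<and> okP P (memit (S t)) \<and> Inv (fst (S t))"
  using MI_S[of t] by (cases "S t" rule: memit.cases) (auto simp: MI_def cls_en_def okP_def)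

lemma fst_S_Suc: "fst (S (Suc t)) = effect A (fst (S t)) (memit (S t))"
  by (simp add: S_Suc fst_mstep)

lemma consume:
  assumes "S t = (c, pend, obl)"
  shows "(\<forall>j<length pend. memit (S (t + j)) = pend ! j) \<and> S (t + length pend) = (exec c pend, [], obl)"
  using assms
proof (induction pend arbitrary: t c)
  case Nil then show ?case by simp
next
  case (Cons e pend)
  have s1: "S (Suc t) = (effect A c e, pend, obl)" using Cons.prems by (simp add: S_Suc)
  note IH = Cons.IH[OF s1]
  show ?case
  proof (intro conjI allI impI)
    fix j assume j: "j < length (e # pend)"
    show "memit (S (t + j)) = (e # pend) ! j"
    proof (cases j)
      case 0 then show ?thesis using Cons.prems by simp
    next
      case (Suc j') then show ?thesis using IH j by auto
    qed
  next
    show "S (t + length (e # pend)) = (exec c (e # pend), [], obl)" using IH by simp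
  qed
qed

lemma to_boundary_obl:
  assumes "S t = (c, [], obl)"
  shows "\<exists>t'\<ge>t. \<exists>c'. S t' = (c', [], [])"
  using assms
proof (induction obl arbitrary: t c)
  case Nil then show ?case by blast
next
  case (Cons e obl)
  define pend where "pend = (if cls_en c e then X c e else [])"
  have s1: "S (Suc t) = (c, pend, obl)" using Cons.prems by (simp add: S_Suc pend_def)
  have s2: "S (Suc t + length pend) = (exec c pend, [], obl)" using consume[OF s1] by simp
  from Cons.IH[OF s2] show ?case by (meson le_add1 order_trans Suc_leD)
qed

lemma to_boundary: "\<exists>t'\<ge>t. \<exists>c'. S t' = (c', [], [])"
proof -
  obtain c pend obl where st: "S t = (c, pend, obl)" by (cases "S t")
  have s2: "S (t + length pend) = (exec c pend, [], obl)" using consume[OF st] by simp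
  from to_boundary_obl[OF s2] show ?thesis by (meson le_add1 order_trans)
qed

lemma pers_S:
  assumes "cls_en (fst (S a)) e" "\<forall>t. a \<le> t \<longrightarrow> t < b \<longrightarrow> memit (S t) \<noteq> e" "a \<le> b"
  shows "cls_en (fst (S b)) e"
  using assms(3,2)
proof (induction b rule: dec_induct)
  case base then show ?case using assms(1) by simp
next
  case (step b)
  have "cls_en (fst (S b)) e" using step by auto
  moreover have "memit (S b) \<noteq> e" using step by auto
  ultimately show ?case using persist[of "fst (S b)" e "memit (S b)"] emit_ok[of b] fst_S_Suc[of b] by simp
qed

lemma cover_obl:
  assumes "S t = (c, [], obl)" "t0 \<le> t" "\<forall>e\<in>set obl. cls_en (fst (S t0)) e"
  shows "\<forall>e\<in>set obl. \<exists>t'\<ge>t0. memit (S t') = e"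
  using assms
proof (induction obl arbitrary: t c)
  case Nil then show ?case by simp
next
  case (Cons e obl)
  define pend where "pend = (if cls_en c e then X c e else [])"
  have s1: "S (Suc t) = (c, pend, obl)" using Cons.prems by (simp add: S_Suc pend_def)
  have s2: "S (Suc t + length pend) = (exec c pend, [], obl)" using consume[OF s1] by simp
  have rest: "\<forall>e\<in>set obl. \<exists>t'\<ge>t0. memit (S t') = e"
    using Cons.IH[OF s2] Cons.prems(2,3) by auto
  have "\<exists>t'\<ge>t0. memit (S t') = e"
  proof (cases "cls_en c e")
    case True
    have mi: "MI (S t)" using MI_S .
    have okE: "okP P e" "Inv c" "I c" using mi Cons.prems(1) by (auto simp: MI_def)
    have hx: "X c e \<noteq> [] \<and> last (X c e) = e" using HX[OF okE(2) okE(3) True okE(1)] by simp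
    hence "pend \<noteq> []" "last pend = e" using True by (auto simp: pend_def)
    hence "pend ! (length pend - 1) = e" by (simp add: last_conv_nth)
    moreover have "length pend - 1 < length pend" using \<open>pend \<noteq> []\<close> by simp
    ultimately have "memit (S (Suc t + (length pend - 1))) = e" using consume[OF s1] by metis
    then show ?thesis using Cons.prems(2) by (metis le_SucI le_add1 order_trans add_Suc)
  next
    case False
    have "cls_en (fst (S t0)) e" using Cons.prems(3) by simp
    then show ?thesis using pers_S[of t0 e t] Cons.prems(1,2) False by auto
  qed
  then show ?case using rest by simp
qed

lemma cover:
  assumes "S t0 = (c, [], [])" "e \<in> set (oblig P c)"
  shows "\<exists>t'\<ge>t0. memit (S t') = e"
proof -
  have s1: "S (Suc t0) = (c, [], oblig P c)" using assms by (simp add: S_Suc)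
  have "\<forall>e\<in>set (oblig P c). cls_en (fst (S t0)) e" using oblig_ok[OF PL] assms(1) by simp
  from cover_obl[OF s1 _ this] assms(2) show ?thesis by simp
qed

end


context sys begin

lemma step_rsp: "cls_en c e \<Longrightarrow> rsp c k = Some d \<Longrightarrow> rsp (effect A c e) k = Some d"
  by (cases e) (auto simp: eff_fields eff_fields_O effect_Idle cls_en_def)

lemma step_qv: "Inv c \<Longrightarrow> qv c k i \<noteq> None \<Longrightarrow> qv (effect A c e) k i = qv c k i"
proof (cases e)
  case (PStep p j)
  assume inv: "Inv c" and q: "qv c k i \<noteq> None"
  have "qv c (nq c p) p = None" using Inv_qv[OF inv, of "nq c p" p] by simp
  then show ?thesis using q PStep by (auto simp: eff_fields)
qed (auto simp: eff_fields_O effect_Idle)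

lemma step_ng: "ng c p \<le> ng (effect A c e) p"
  by (cases e) (auto simp: eff_fields eff_fields_O effect_Idle ngn_def split: inp.splits)

lemma step_nq: "nq c p \<le> nq (effect A c e) p"
  by (cases e) (auto simp: eff_fields eff_fields_O effect_Idle)

lemma step_ng_resp: "ng (effect A c (PStep p (Resp d))) p = Suc (ng c p)"
  by (simp add: eff_fields ngn_def)

end

context flp begin

lemma nL_le: "nL \<le> n" using nLdef f1 by simp

lemma cls_en_enabled:
  assumes "cls_en c e" "\<forall>p i. e = PStep p i \<longrightarrow> p \<notin> F t"
  shows "enabled n (n + 1) F t c e"
proof (cases e)
  case (PStep p i)
  then show ?thesis using assms nL_le by (auto simp: enabled_def cls_en_def split: inp.splits)
next
  case (ORespond k d)
  have en: "rsp c k = None" "k = 0 \<or> rsp c (k - 1) \<noteq> None" "\<forall>i\<in>L. qv c k i \<noteq> None"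
     "d = (\<exists>i\<in>L. qv c k i = Some True)"
    using assms(1) ORespond by (auto simp: cls_en_def)
  obtain i0 where i0: "i0 \<in> L" "qv c k i0 = Some d"
  proof (cases d)
    case True
    then show ?thesis using en(4) that by auto
  next
    case False
    have "1 \<in> L" using nL_pos by simp
    then obtain b where "qv c k 1 = Some b" using en(3) by blast
    moreover have "b = False" using en(4) False \<open>1 \<in> L\<close> calculation by auto
    ultimately show ?thesis using that \<open>1 \<in> L\<close> False by auto
  qed
  have i0': "i0 \<in> {1..n + 1}" using i0(1) nL_le by auto
  have ov: "oracle_valid (n + 1) F' c k d" for F'
    unfolding oracle_valid_def ConsP_def
  proof (intro allI impI)
    fix W :: "nat \<Rightarrow> bool"
    assume h: "\<forall>i\<in>{1..n + 1}. \<forall>b. qv c k i = Some b \<longrightarrow> W i = b"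
    have Wi0: "W i0 = d" using h i0 i0' by auto
    show "d \<in> (if \<exists>v. \<forall>i\<in>{1..n + 1}. W i = v then {W (SOME i. i \<in> {1..n + 1})} else UNIV)"
    proof (cases "\<exists>v. \<forall>i\<in>{1..n + 1}. W i = v")
      case True
      then obtain v where v: "\<forall>i\<in>{1..n + 1}. W i = v" by blast
      have "(SOME i. i \<in> {1..n + 1}) \<in> {1..n + 1}" by (rule someI_ex) auto
      then show ?thesis using v Wi0 i0' True by auto
    next
      case False
      then show ?thesis by (simp only: if_False) simp
    qed
  qed
  then show ?thesis using en ORespond by (simp add: enabled_def)
next
  case Idle
  then show ?thesis by (simp add: enabled_def)
qed

end

context runctx begin

definition E :: "nat \<Rightarrow> 'm ev" where
  "E t = (if t < T then \<sigma> ! t else memit (S (t - T)))"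

definition rho :: "nat \<Rightarrow> ('s, 'm) cfg" where
  "rho t = exec (init_cfg A V) (map E [0..<t])"

lemma rho_Suc: "rho (Suc t) = effect A (rho t) (E t)"
  by (simp add: rho_def)

lemma rho_0: "rho 0 = init_cfg A V" by (simp add: rho_def)

lemma map_E_take: "t \<le> T \<Longrightarrow> map E [0..<t] = take t \<sigma>"
  by (rule nth_equalityI) (auto simp: E_def)

lemma rho_S: "rho (T + t) = fst (S t)"
proof (induction t)
  case 0
  then show ?case using map_E_take[of T] by (simp add: rho_def S_0)
next
  case (Suc t)
  have "E (T + t) = memit (S t)" by (simp add: E_def)
  then show ?case using Suc by (simp add: rho_Suc[of "T + t", simplified] fst_S_Suc)
qed

lemma E_en: "cls_en (rho t) (E t) \<and> Inv (rho t) \<and> (T \<le> t \<longrightarrow> okP P (E t))"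
proof (cases "t < T")
  case True
  have r: "rho t = exec (init_cfg A V) (take t \<sigma>)" using True map_E_take[of t] by (simp add: rho_def)
  have "sok (init_cfg A V) (take t \<sigma> @ drop t \<sigma>)" using sig by simp
  hence s: "sok (rho t) (drop t \<sigma>)" "sok (init_cfg A V) (take t \<sigma>)" using r by (simp_all only: sok_append)
  have "drop t \<sigma> = \<sigma> ! t # drop (Suc t) \<sigma>" using True by (simp add: Cons_nth_drop_Suc)
  hence "cls_en (rho t) (\<sigma> ! t)" using s(1) by (metis sok.simps(2))
  moreover have "Inv (rho t)" using r Inv_exec[OF Inv_init s(2)] by simp
  ultimately show ?thesis using True by (simp add: E_def)
next
  case False
  then obtain u where u: "t = T + u" by (metis le_add_diff_inverse not_less)
  have "E t = memit (S u)" using u by (simp add: E_def)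
  then show ?thesis using emit_ok[of u] rho_S[of u] u by simp
qed

lemma rho_mono:
  assumes "\<And>c e. Inv c \<Longrightarrow> cls_en c e \<Longrightarrow> Q c \<Longrightarrow> Q (effect A c e)" "Q (rho a)" "a \<le> b"
  shows "Q (rho b)"
  using assms(3)
proof (induction b rule: dec_induct)
  case base then show ?case using assms(2) .
next
  case (step b)
  then show ?case using assms(1)[of "rho b" "E b"] E_en[of b] rho_Suc[of b] by simp
qed

lemma pers_rho:
  assumes "cls_en (rho a) e" "\<forall>t. a \<le> t \<longrightarrow> t < b \<longrightarrow> E t \<noteq> e" "a \<le> b"
  shows "cls_en (rho b) e"
  using assms(3,2)
proof (induction b rule: dec_induct)
  case base then show ?case using assms(1) by simp
next
  case (step b)
  have "cls_en (rho b) e" using step by auto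
  moreover have "E b \<noteq> e" using step by auto
  ultimately show ?case using persist[of "rho b" e "E b"] E_en[of b] rho_Suc[of b] by simp
qed

lemma boundary: "\<exists>t0 c. t \<le> T + t0 \<and> S t0 = (c, [], []) \<and> rho (T + t0) = c"
proof -
  obtain t0 c where "t0 \<ge> t" "S t0 = (c, [], [])" using to_boundary[of t] by blast
  then show ?thesis using rho_S[of t0] by (intro exI[of _ t0] exI[of _ c]) auto
qed

lemma emitted:
  assumes "S t0 = (c, [], [])" "e \<in> set (oblig P c)"
  shows "\<exists>t'\<ge>T + t0. E t' = e"
proof -
  obtain t' where "t' \<ge> t0" "memit (S t') = e" using cover[OF assms] by blast
  then show ?thesis by (intro exI[of _ "T + t'"]) (simp add: E_def)
qed

lemma finP: "finite P" using PL finite_subset by blast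

lemma oblig_NoInp: "p \<in> P \<Longrightarrow> PStep p NoInp \<in> set (oblig P c)"
  using oblig_set[OF finP] by auto

lemma oblig_msg: "p \<in> P \<Longrightarrow> (q, p, x) \<in># net c \<Longrightarrow> PStep p (Msg q x) \<in> set (oblig P c)"
  using oblig_set[OF finP] by (auto simp: set_msg_obl msgset_def)

lemma oblig_resp: "p \<in> P \<Longrightarrow> ng c p < nq c p \<Longrightarrow> rsp c (ng c p) = Some d \<Longrightarrow>
    PStep p (Resp d) \<in> set (oblig P c)"
  using oblig_set[OF finP] by (auto simp: resp_obl_def)

lemma oblig_oracle: "cls_en c (ORespond k d) \<Longrightarrow> oo c \<in> set (oblig P c)"
  using oblig_set[OF finP] by (auto simp: oracle_obl_def)

end


lemma common_time:
  assumes "finite K" "\<forall>i\<in>K. \<exists>t. Q i (t::nat)" "\<And>i t t'. Q i t \<Longrightarrow> t \<le> t' \<Longrightarrow> Q i t'"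
  shows "\<exists>t. \<forall>i\<in>K. Q i t"
proof -
  obtain g where g: "\<forall>i\<in>K. Q i (g i)" using assms(2) by metis
  have "\<forall>i\<in>K. Q i (sum g K)"
  proof
    fix i assume i: "i \<in> K"
    have "g i \<le> sum g K" using member_le_sum[of i K g] i assms(1) by simp
    then show "Q i (sum g K)" using assms(3) g i by blast
  qed
  then show ?thesis by blast
qed

context runctx begin

definition Fp :: "nat \<Rightarrow> nat set" where
  "Fp t = D \<union> (if T \<le> t then L - P else {})"

lemma fp: "failure_pattern {1..n} Fp"
  unfolding failure_pattern_def Fp_def mono_def using nL_le by auto

lemma faulty: "Faulty Fp = D \<union> (L - P)"
  unfolding Faulty_def Fp_def by (auto split: if_splits)

lemma card_faulty: "card (Faulty Fp) \<le> f"
proof -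
  have "card (Faulty Fp) \<le> card D + card (L - P)"
    unfolding faulty by (rule card_Un_le)
  also have "card D = f - 1" using nLdef fn f1 by simp
  finally show ?thesis using cardP f1 by linarith
qed

lemma correct_eq: "correct n Fp = P"
  unfolding correct_def faulty using PL nL_le by auto

lemma E_enabled: "enabled n (n + 1) Fp t (rho t) (E t)"
proof -
  have "\<forall>p i. E t = PStep p i \<longrightarrow> p \<notin> Fp t"
  proof (intro allI impI)
    fix p i assume e: "E t = PStep p i"
    have pL: "p \<in> L" using E_en[of t] e by (simp add: cls_en_def)
    show "p \<notin> Fp t"
    proof (cases "T \<le> t")
      case True
      then have "p \<in> P" using E_en[of t] e by (simp add: okP_def)
      then show ?thesis using pL True by (auto simp: Fp_def)
    next
      case False
      then show ?thesis using pL by (auto simp: Fp_def)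
    qed
  qed
  then show ?thesis using cls_en_enabled E_en by blast
qed

lemma live_steps: "p \<in> P \<Longrightarrow> \<exists>t'\<ge>t. \<exists>i. E t' = PStep p i"
proof -
  assume p: "p \<in> P"
  obtain t0 c where b: "t \<le> T + t0" "S t0 = (c, [], [])" using boundary[of t] by blast
  obtain t' where "t' \<ge> T + t0" "E t' = PStep p NoInp" using emitted[OF b(2) oblig_NoInp[OF p]] by blast
  then show ?thesis using b(1) by (intro exI[of _ t']) auto
qed

lemma msgs_delivered:
  assumes p: "p \<in> P" and m: "(q, p, x) \<in># net (rho t)"
  shows "\<exists>t'\<ge>t. E t' = PStep p (Msg q x)"
proof (rule ccontr)
  assume na: "\<not> ?thesis"
  obtain t0 c where b: "t \<le> T + t0" "S t0 = (c, [], [])" "rho (T + t0) = c" using boundary[of t] by blast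
  have en: "cls_en (rho t) (PStep p (Msg q x))" using m p PL by (auto simp: cls_en_def)
  have "cls_en (rho (T + t0)) (PStep p (Msg q x))"
    using pers_rho[OF en _ b(1)] na by auto
  hence "(q, p, x) \<in># net c" using b(3) by (simp add: cls_en_def)
  then obtain t' where "t' \<ge> T + t0" "E t' = PStep p (Msg q x)"
    using emitted[OF b(2) oblig_msg[OF p]] by blast
  then show False using na b(1) by auto
qed

lemma qv_persist: "qv (rho a) k i \<noteq> None \<Longrightarrow> a \<le> b \<Longrightarrow> qv (rho b) k i \<noteq> None"
  using rho_mono[of "\<lambda>c. qv c k i \<noteq> None" a b] step_qv by auto

lemma rsp_persist: "rsp (rho a) k \<noteq> None \<Longrightarrow> a \<le> b \<Longrightarrow> rsp (rho b) k \<noteq> None"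
  using rho_mono[of "\<lambda>c. rsp c k \<noteq> None" a b] step_rsp by fastforce

lemma ng_mono: "a \<le> b \<Longrightarrow> ng (rho a) p \<le> ng (rho b) p"
  using rho_mono[of "\<lambda>c. ng (rho a) p \<le> ng c p" a b] step_ng order_trans by blast

lemma qv_L: "qv (rho t) k i \<noteq> None \<Longrightarrow> i \<in> L"
  using E_en[of t] by (simp add: Inv_def)

lemma oracle_live:
  assumes cardq: "card {i \<in> {1..n + 1}. \<exists>t. qv (rho t) k i \<noteq> None} \<ge> n + 1 - f"
  shows "\<forall>p\<in>correct n Fp. (\<exists>t. qv (rho t) k p \<noteq> None) \<longrightarrow> (\<exists>t. ng (rho t) p > k)"
proof -
  let ?Q = "{i \<in> {1..n + 1}. \<exists>t. qv (rho t) k i \<noteq> None}"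
  have QL: "?Q \<subseteq> L" using qv_L by blast
  have "card ?Q \<ge> card L" using cardq nLdef by simp
  hence QeL: "?Q = L" using QL card_subset_eq[of L ?Q] card_mono[OF _ QL] by (simp add: le_antisym)
  have "\<forall>i\<in>L. \<exists>t. qv (rho t) k i \<noteq> None" using QeL by blast
  then obtain tq where tq: "\<forall>i\<in>L. qv (rho tq) k i \<noteq> None"
    using common_time[of L "\<lambda>i t. qv (rho t) k i \<noteq> None"] qv_persist by blast
  have allq: "\<forall>i\<in>L. qv (rho t) j i \<noteq> None" if "j \<le> k" "tq \<le> t" for j t
  proof
    fix i assume i: "i \<in> L"
    have "qv (rho t) k i \<noteq> None" using qv_persist tq i that(2) by blast
    hence "k < nq (rho t) i" using Inv_qv[of "rho t" k i] E_en[of t] by simp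
    then show "qv (rho t) j i \<noteq> None" using Inv_qv[of "rho t" j i] E_en[of t] that(1) by simp
  qed
  have R: "\<exists>t. rsp (rho t) j \<noteq> None" if "j \<le> k" for j
    using that
  proof (induction j)
    case 0
    obtain t0 c where b: "tq \<le> T + t0" "S t0 = (c, [], [])" "rho (T + t0) = c" using boundary[of tq] by blast
    show ?case
    proof (cases "rsp c 0 = None")
      case False then show ?thesis using b(3) by blast
    next
      case True
      have ce: "cls_en c (ORespond 0 (\<exists>i\<in>L. qv c 0 i = Some True))"
        using True allq[of 0 "T + t0"] b by (simp add: cls_en_def)
      then obtain t' where t': "E t' = oo c" using emitted[OF b(2) oblig_oracle] by blast
      obtain k' d' where o: "oo c = ORespond k' d'" "cls_en c (oo c)" using oo_en ce by blast
      have "k' = 0" using oracle_unique[OF _ ce, of k' d'] o E_en[of "T + t0"] b(3) by auto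
      hence "rsp (rho (Suc t')) 0 = Some d'" using t' o by (simp add: rho_Suc eff_fields_O)
      then show ?thesis by blast
    qed
  next
    case (Suc j)
    obtain tp where tp: "rsp (rho tp) j \<noteq> None" using Suc by auto
    obtain t0 c where b: "max tp tq \<le> T + t0" "S t0 = (c, [], [])" "rho (T + t0) = c"
      using boundary[of "max tp tq"] by blast
    show ?case
    proof (cases "rsp c (Suc j) = None")
      case False then show ?thesis using b(3) by blast
    next
      case True
      have "rsp c j \<noteq> None" using rsp_persist[OF tp, of "T + t0"] b by simp
      hence ce: "cls_en c (ORespond (Suc j) (\<exists>i\<in>L. qv c (Suc j) i = Some True))"
        using True allq[of "Suc j" "T + t0"] b Suc.prems by (simp add: cls_en_def)
      then obtain t' where t': "E t' = oo c" using emitted[OF b(2) oblig_oracle] by blast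
      obtain k' d' where o: "oo c = ORespond k' d'" "cls_en c (oo c)" using oo_en ce by blast
      have "k' = Suc j" using oracle_unique[OF _ ce, of k' d'] o E_en[of "T + t0"] b(3) by auto
      hence "rsp (rho (Suc t')) (Suc j) = Some d'" using t' o by (simp add: rho_Suc eff_fields_O)
      then show ?thesis by blast
    qed
  qed
  show ?thesis
  proof (intro ballI impI)
    fix p assume pc: "p \<in> correct n Fp" and "\<exists>t. qv (rho t) k p \<noteq> None"
    then obtain tp where tp: "qv (rho tp) k p \<noteq> None" by blast
    have pP: "p \<in> P" using pc correct_eq by simp
    obtain tk where tk: "rsp (rho tk) k \<noteq> None" using R by blast
    have G: "\<exists>t. ng (rho t) p \<ge> i" if "i \<le> Suc k" for i
      using that
    proof (induction i)
      case 0 then show ?case by simp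
    next
      case (Suc i)
      obtain ti where ti: "ng (rho ti) p \<ge> i" using Suc by auto
      obtain t0 c where b: "max ti (max tk tp) \<le> T + t0" "S t0 = (c, [], [])" "rho (T + t0) = c"
        using boundary[of "max ti (max tk tp)"] by blast
      show ?case
      proof (cases "ng c p \<ge> Suc i")
        case True then show ?thesis using b(3) by blast
      next
        case False
        have "ng c p \<ge> i" using ng_mono[of ti "T + t0" p] ti b by simp
        hence ngc: "ng c p = i" using False by simp
        have inv: "Inv c" using E_en[of "T + t0"] b(3) by simp
        have "qv c k p \<noteq> None" using qv_persist[OF tp, of "T + t0"] b by simp
        hence nqc: "k < nq c p" using Inv_qv[OF inv] by simp
        have "rsp c k \<noteq> None" using rsp_persist[OF tk, of "T + t0"] b by simp
        hence "rsp c i \<noteq> None" using inv Suc.prems unfolding Inv_def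
          by (metis Suc_le_lessD le_neq_implies_less not_less_eq_eq)
        then obtain d where d: "rsp c (ng c p) = Some d" using ngc by auto
        have "ng c p < nq c p" using ngc nqc Suc.prems by simp
        then obtain t' where t': "t' \<ge> T + t0" "E t' = PStep p (Resp d)"
          using emitted[OF b(2) oblig_resp[OF pP _ d]] by blast
        have "ng (rho t') p \<ge> i" using ng_mono[OF t'(1), of p] b(3) ngc by simp
        hence "ng (rho (Suc t')) p \<ge> Suc i" using t'(2) by (simp add: rho_Suc step_ng_resp)
        then show ?thesis by blast
      qed
    qed
    obtain t where "ng (rho t) p \<ge> Suc k" using G by blast
    then show "\<exists>t. ng (rho t) p > k" by (intro exI[of _ t]) simp
  qed
qed

theorem adm: "admissible_run A n (n + 1) f Fp V rho E"
  unfolding admissible_run_def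
proof (intro conjI allI ballI impI)
  show "rho 0 = init_cfg A V" by (rule rho_0)
next
  fix t show "enabled n (n + 1) Fp t (rho t) (E t)" by (rule E_enabled)
next
  fix t show "rho (Suc t) = effect A (rho t) (E t)" by (rule rho_Suc)
next
  fix p t assume "p \<in> correct n Fp"
  then show "\<exists>t'\<ge>t. \<exists>i. E t' = PStep p i" using live_steps correct_eq by simp
next
  fix p t q x assume "p \<in> correct n Fp" "(q, p, x) \<in># net (rho t)"
  then show "\<exists>t'\<ge>t. E t' = PStep p (Msg q x)" using msgs_delivered correct_eq by simp
next
  fix k p assume c: "n + 1 - f \<le> card {i \<in> {1..n + 1}. \<exists>t. qv (rho t) k i \<noteq> None}"
    and "p \<in> correct n Fp" "\<exists>t. qv (rho t) k p \<noteq> None"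
  then show "\<exists>t. k < ng (rho t) p"
    using oracle_live[OF c] by simp
qed

lemma sol:
  "(\<forall>p\<in>P. \<exists>t. dec A p (st (rho t) p) \<noteq> None) \<and>
   (\<forall>p\<in>{1..n}. \<forall>t d. dec A p (st (rho t) p) = Some d \<longrightarrow> (\<forall>t'\<ge>t. dec A p (st (rho t') p) = Some d)) \<and>
   (\<forall>p\<in>{1..n}. \<forall>q\<in>{1..n}. \<forall>t t' d d'. dec A p (st (rho t) p) = Some d \<longrightarrow>
       dec A q (st (rho t') q) = Some d' \<longrightarrow> d = d') \<and>
   (\<forall>p\<in>{1..n}. \<forall>t d. dec A p (st (rho t) p) = Some d \<longrightarrow> d \<in> ConsP {1..n} Fp V)"
proof -
  have h: "failure_pattern {1..n} Fp \<and> card (Faulty Fp) \<le> f \<and> admissible_run A n (n + 1) f Fp V rho E"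
    using fp card_faulty adm by simp
  have s: "\<forall>F V \<rho> E. failure_pattern {1..n} F \<and> card (Faulty F) \<le> f \<and> admissible_run A n (n + 1) f F V \<rho> E \<longrightarrow>
        (\<forall>p\<in>correct n F. \<exists>t. dec A p (st (\<rho> t) p) \<noteq> None) \<and>
        (\<forall>p\<in>{1..n}. \<forall>t d. dec A p (st (\<rho> t) p) = Some d \<longrightarrow>
            (\<forall>t'\<ge>t. dec A p (st (\<rho> t') p) = Some d)) \<and>
        (\<forall>p\<in>{1..n}. \<forall>q\<in>{1..n}. \<forall>t t' d d'. dec A p (st (\<rho> t) p) = Some d \<longrightarrow>
            dec A q (st (\<rho> t') q) = Some d' \<longrightarrow> d = d') \<and>
        (\<forall>p\<in>{1..n}. \<forall>t d. dec A p (st (\<rho> t) p) = Some d \<longrightarrow> d \<in> ConsP {1..n} F V)"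
    using solv unfolding solves_Cons_with_oracle_def .
  have "(\<forall>p\<in>correct n Fp. \<exists>t. dec A p (st (rho t) p) \<noteq> None) \<and>
        (\<forall>p\<in>{1..n}. \<forall>t d. dec A p (st (rho t) p) = Some d \<longrightarrow>
            (\<forall>t'\<ge>t. dec A p (st (rho t') p) = Some d)) \<and>
        (\<forall>p\<in>{1..n}. \<forall>q\<in>{1..n}. \<forall>t t' d d'. dec A p (st (rho t) p) = Some d \<longrightarrow>
            dec A q (st (rho t') q) = Some d' \<longrightarrow> d = d') \<and>
        (\<forall>p\<in>{1..n}. \<forall>t d. dec A p (st (rho t) p) = Some d \<longrightarrow> d \<in> ConsP {1..n} Fp V)"
    using spec[OF spec[OF spec[OF spec[OF s, of Fp], of V], of rho], of E] h by (rule mp)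
  then show ?thesis unfolding correct_eq .
qed

end


context runctx begin

lemma seg: "a \<le> b \<Longrightarrow> sok (rho a) (map E [a..<b]) \<and> exec (rho a) (map E [a..<b]) = rho b"
proof (induction b rule: dec_induct)
  case base then show ?case by simp
next
  case (step b)
  then show ?case using E_en[of b] rho_Suc[of b] by simp
qed

lemma seg_ok: "T \<le> a \<Longrightarrow> \<forall>e\<in>set (map E [a..<b]). okP P e"
  using E_en by auto

lemma rho_le: "t \<le> T \<Longrightarrow> rho t = exec (init_cfg A V) (take t \<sigma>)"
  using map_E_take by (simp add: rho_def)

lemma rho_T: "rho T = c0" using rho_le[of T] by simp

lemma I_boundary: "S t0 = (c, [], []) \<Longrightarrow> I c"
  using MI_S[of t0] by (simp add: MI_def)

end

context flp begin

lemma nL2: "2 \<le> nL" using nLdef fn f1 by linarith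

lemma mk_runctx:
  assumes "sok (init_cfg A V) \<sigma>" "P \<subseteq> L" "card (L - P) \<le> 1"
    "\<And>c e. Inv c \<Longrightarrow> I c \<Longrightarrow> cls_en c e \<Longrightarrow> okP P e \<Longrightarrow>
       sok c (X c e) \<and> (\<forall>e'\<in>set (X c e). okP P e') \<and> I (exec c (X c e)) \<and> X c e \<noteq> [] \<and> last (X c e) = e"
    "I (exec (init_cfg A V) \<sigma>)"
  shows "runctx A nL n f V \<sigma> P X I"
proof (rule runctx.intro)
  show "flp A nL n f"
    by (intro flp.intro sys.intro flp_axioms.intro nL_pos f1 fn solv nLdef)
  show "runctx_axioms A nL V \<sigma> P X I"
    by (intro runctx_axioms.intro assms) auto
qed

lemma mk_runctx_triv:
  assumes "sok (init_cfg A V) \<sigma>" "P \<subseteq> L" "card (L - P) \<le> 1"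
  shows "runctx A nL n f V \<sigma> P (\<lambda>c e. [e]) (\<lambda>_. True)"
  by (rule mk_runctx[OF assms]) auto

definition Rinit :: "('s, 'm) cfg \<Rightarrow> bool" where
  "Rinit c \<longleftrightarrow> (\<exists>V xs. sok (init_cfg A V) xs \<and> exec (init_cfg A V) xs = c)"

definition decv :: "('s, 'm) cfg \<Rightarrow> bool \<Rightarrow> bool" where
  "decv c v \<longleftrightarrow> (\<exists>q\<in>{1..n}. dec A q (st c q) = Some v)"

definition val :: "('s, 'm) cfg \<Rightarrow> bool set" where
  "val c = {v. \<exists>c'. reach c c' \<and> decv c' v}"

lemma Rinit_reach: "Rinit c \<Longrightarrow> reach c c' \<Longrightarrow> Rinit c'"
  unfolding Rinit_def reach_def by (metis sok_append exec_append)

lemma Rinit_Inv: "Rinit c \<Longrightarrow> Inv c"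
  unfolding Rinit_def using Inv_exec Inv_init by blast

lemma val_mono: "reach c c' \<Longrightarrow> val c' \<subseteq> val c"
  unfolding val_def using reach_trans by blast

lemma decided_uni:
  assumes "Rinit c" "decv c v" "reach c c'" "decv c' w"
  shows "v = w"
proof -
  obtain V xs where xs: "sok (init_cfg A V) xs" "exec (init_cfg A V) xs = c" using assms(1) Rinit_def by blast
  obtain ys where ys: "sok c ys" "exec c ys = c'" using assms(3) reach_def by blast
  have ok: "sok (init_cfg A V) (xs @ ys)" using xs ys by simp
  interpret R: runctx A nL n f V "xs @ ys" L "\<lambda>c e. [e]" "\<lambda>_. True"
    by (rule mk_runctx_triv[OF ok]) auto
  have r1: "R.rho (length xs) = c" using R.rho_le[of "length xs"] xs by simp
  have r2: "R.rho (length (xs @ ys)) = c'" using R.rho_T xs ys by simp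
  obtain p where p: "p \<in> {1..n}" "dec A p (st c p) = Some v" using assms(2) decv_def by blast
  obtain q where q: "q \<in> {1..n}" "dec A q (st c' q) = Some w" using assms(4) decv_def by blast
  have agr: "\<forall>p\<in>{1..n}. \<forall>q\<in>{1..n}. \<forall>t t' d d'. dec A p (st (R.rho t) p) = Some d \<longrightarrow>
       dec A q (st (R.rho t') q) = Some d' \<longrightarrow> d = d'"
    using R.sol[THEN conjunct2, THEN conjunct2, THEN conjunct1] .
  show ?thesis using agr p q r1 r2 by blast
qed

lemma val_sub: "Rinit c \<Longrightarrow> decv c v \<Longrightarrow> val c \<subseteq> {v}"
  unfolding val_def using decided_uni by blast

lemma crash_run:
  assumes "Rinit c"
  shows "\<exists>xs. sok c xs \<and> (\<forall>e\<in>set xs. notp p e) \<and>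
     (\<exists>q\<in>{1..n}. q \<noteq> p \<and> (\<exists>w. dec A q (st (exec c xs) q) = Some w))"
proof -
  obtain V ys where ys: "sok (init_cfg A V) ys" "exec (init_cfg A V) ys = c" using assms Rinit_def by blast
  have cd: "card (L - (L - {p})) \<le> 1"
  proof -
    have "L - (L - {p}) \<subseteq> {p}" by auto
    from card_mono[OF _ this] show ?thesis by simp
  qed
  interpret R: runctx A nL n f V ys "L - {p}" "\<lambda>c e. [e]" "\<lambda>_. True"
    by (rule mk_runctx_triv[OF ys(1) _ cd]) auto
  obtain q where q: "q \<in> L - {p}"
  proof (cases "p = 1")
    case True then show ?thesis using that[of 2] nL2 by auto
  next
    case False then show ?thesis using that[of 1] nL2 by auto
  qed
  obtain t where t: "dec A q (st (R.rho t) q) \<noteq> None"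
    using R.sol[THEN conjunct1] q by blast
  let ?t = "max t (length ys)"
  have qn: "q \<in> {1..n}" using q nL_le by auto
  have irr: "\<forall>p\<in>{1..n}. \<forall>t d. dec A p (st (R.rho t) p) = Some d \<longrightarrow> (\<forall>t'\<ge>t. dec A p (st (R.rho t') p) = Some d)"
    using R.sol[THEN conjunct2, THEN conjunct1] .
  obtain d where d: "dec A q (st (R.rho t) q) = Some d" using t by blast
  have "\<forall>t'\<ge>t. dec A q (st (R.rho t') q) = Some d" using irr qn d by blast
  hence dq: "dec A q (st (R.rho ?t) q) \<noteq> None" by simp
  have sg: "sok (R.rho (length ys)) (map R.E [length ys..<?t]) \<and> exec (R.rho (length ys)) (map R.E [length ys..<?t]) = R.rho ?t"
    using R.seg[of "length ys" ?t] by simp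
  have okp: "\<forall>e\<in>set (map R.E [length ys..<?t]). notp p e"
  proof
    fix e assume "e \<in> set (map R.E [length ys..<?t])"
    then have ok: "okP (L - {p}) e" using R.seg_ok[of "length ys" ?t] by blast
    show "notp p e" unfolding notp_def
    proof
      fix i show "e \<noteq> PStep p i"
      proof
        assume "e = PStep p i"
        then have "p \<in> L - {p}" using ok unfolding okP_def by blast
        then show False by simp
      qed
    qed
  qed
  have c: "R.rho (length ys) = c" using R.rho_T ys by simp
  let ?xs = "map R.E [length ys..<?t]"
  have s1: "sok c ?xs" using sg c by simp
  have s2: "exec c ?xs = R.rho ?t" using sg c by simp
  have "\<exists>w. dec A q (st (exec c ?xs) q) = Some w" using dq s2 by auto
  moreover have "q \<noteq> p" using q by simp
  ultimately show ?thesis using s1 okp qn by blast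
qed

lemma val_ne: "Rinit c \<Longrightarrow> val c \<noteq> {}"
  using crash_run[of c 0] unfolding val_def decv_def reach_def by blast

lemma univalent: "Rinit c \<Longrightarrow> val c \<noteq> UNIV \<Longrightarrow> \<exists>b. val c = {b}"
proof -
  assume r: "Rinit c" and nu: "val c \<noteq> UNIV"
  have ne: "val c \<noteq> {}" using val_ne[OF r] .
  show ?thesis
  proof (cases "True \<in> val c")
    case True
    have "False \<notin> val c"
    proof
      assume "False \<in> val c"
      then have "val c = UNIV" using True by (auto intro: bool_induct)
      then show False using nu by simp
    qed
    then have "val c = {True}" using True by (auto intro: bool_induct)
    then show ?thesis by blast
  next
    case False
    then obtain b where b: "b \<in> val c" using ne by blast
    then have "b = False" using False by (cases b) auto
    then have "val c = {False}" using False b by (auto intro: bool_induct)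
    then show ?thesis by blast
  qed
qed

end


lemma find_switch: "g (0::nat) \<Longrightarrow> \<not> g n \<Longrightarrow> \<exists>j<n. g j \<and> \<not> g (Suc j)"
proof (induction n)
  case 0 then show ?case by simp
next
  case (Suc n)
  show ?case
  proof (cases "g n")
    case True then show ?thesis using Suc.prems by auto
  next
    case False then show ?thesis using Suc by (meson less_SucI)
  qed
qed

context sys begin

lemma sok_okL: "sok c ys \<Longrightarrow> e' \<in> set ys \<Longrightarrow> (\<forall>p i. e' = PStep p i \<longrightarrow> p \<in> L)"
proof (induction ys arbitrary: c)
  case Nil then show ?case by simp
next
  case (Cons x ys)
  then show ?case by (auto simp: cls_en_def)
qed

end

context flp begin

lemma val_init_sub: "val (init_cfg A V) \<subseteq> ConsP {1..n} F V"
proof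
  fix w assume "w \<in> val (init_cfg A V)"
  then obtain c' xs where xs: "sok (init_cfg A V) xs" "exec (init_cfg A V) xs = c'" and d: "decv c' w"
    unfolding val_def reach_def by blast
  interpret R: runctx A nL n f V xs L "\<lambda>c e. [e]" "\<lambda>_. True"
    by (rule mk_runctx_triv[OF xs(1)]) auto
  have r: "R.rho (length xs) = c'" using R.rho_T xs by simp
  have vd: "\<forall>p\<in>{1..n}. \<forall>t d. dec A p (st (R.rho t) p) = Some d \<longrightarrow> d \<in> ConsP {1..n} R.Fp V"
    using R.sol[THEN conjunct2, THEN conjunct2, THEN conjunct2] .
  obtain q where q: "q \<in> {1..n}" "dec A q (st c' q) = Some w" using d decv_def by blast
  have "w \<in> ConsP {1..n} R.Fp V" using vd q r by blast
  then show "w \<in> ConsP {1..n} F V" by (simp add: ConsP_def)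
qed

lemma n_pos: "1 \<le> n" using nL_le nL_pos by simp

lemma init_bival: "\<exists>V. val (init_cfg A V) = UNIV"
proof (rule ccontr)
  assume H: "\<not> ?thesis"
  define W where "W = (\<lambda>j::nat. \<lambda>i::nat. i \<le> j)"
  have Ri: "Rinit (init_cfg A V)" for V unfolding Rinit_def by (intro exI[of _ V] exI[of _ "[]"]) simp
  have uni: "\<exists>b. val (init_cfg A V) = {b}" for V using univalent[OF Ri] H by blast
  have c0: "ConsP {1..n} (\<lambda>_. {}) (W 0) = {False}"
  proof -
    have "(SOME i. i \<in> {1..n}) \<in> {1..n}" by (rule someI_ex) (use n_pos in auto)
    then show ?thesis unfolding ConsP_def W_def by auto
  qed
  have cn: "ConsP {1..n} (\<lambda>_. {}) (W n) = {True}"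
  proof -
    have "(SOME i. i \<in> {1..n}) \<in> {1..n}" by (rule someI_ex) (use n_pos in auto)
    then show ?thesis unfolding ConsP_def W_def by auto
  qed
  have g0: "val (init_cfg A (W 0)) = {False}"
    using uni[of "W 0"] val_init_sub[of "W 0" "\<lambda>_. {}"] c0 by auto
  have gn: "val (init_cfg A (W n)) \<noteq> {False}"
    using uni[of "W n"] val_init_sub[of "W n" "\<lambda>_. {}"] cn by auto
  obtain j where j: "j < n" "val (init_cfg A (W j)) = {False}" "val (init_cfg A (W (Suc j))) \<noteq> {False}"
    using find_switch[of "\<lambda>j. val (init_cfg A (W j)) = {False}" n] g0 gn by blast
  have j1: "val (init_cfg A (W (Suc j))) = {True}"
  proof -
    obtain b where b: "val (init_cfg A (W (Suc j))) = {b}" using uni by blast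
    then show ?thesis using j(3) by (cases b) auto
  qed
  let ?p = "Suc j"
  have sm: "sim ?p (init_cfg A (W j)) (init_cfg A (W (Suc j)))"
    unfolding sim_def init_cfg_def W_def by (auto simp: le_Suc_eq)
  obtain xs q w where xs: "sok (init_cfg A (W j)) xs" "\<forall>e\<in>set xs. notp ?p e" "q \<in> {1..n}" "q \<noteq> ?p"
    "dec A q (st (exec (init_cfg A (W j)) xs) q) = Some w"
    using crash_run[OF Ri, of "W j" ?p] by blast
  have "w \<in> val (init_cfg A (W j))"
    unfolding val_def reach_def decv_def using xs by blast
  hence w0: "w = False" using j(2) by simp
  have sl: "sok (init_cfg A (W (Suc j))) xs \<and> sim ?p (exec (init_cfg A (W j)) xs) (exec (init_cfg A (W (Suc j))) xs)"
    using sim_list[OF sm xs(1,2)] .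
  hence "dec A q (st (exec (init_cfg A (W (Suc j))) xs) q) = Some w"
    using xs(4,5) unfolding sim_def by metis
  hence "w \<in> val (init_cfg A (W (Suc j)))"
    unfolding val_def reach_def decv_def using sl xs(3) by blast
  hence "w = True" using j1 by simp
  then show False using w0 by simp
qed

end


context flp begin

lemma Rinit_nonempty: "Rinit c \<Longrightarrow> val c = {b} \<Longrightarrow> val c = {b'} \<Longrightarrow> b = b'"
  by auto

lemma bival_step:
  assumes Rc: "Rinit c" and bv: "val c = UNIV" and en: "cls_en c e"
  shows "\<exists>xs. sok c xs \<and> e \<notin> set xs \<and> val (effect A (exec c xs) e) = UNIV"
proof (rule ccontr)
  assume H: "\<not> ?thesis"
  have invc: "Inv c" using Rinit_Inv[OF Rc] .
  have good: "Rinit (effect A (exec c xs) e) \<and> cls_en (exec c xs) e \<and> (\<exists>b. val (effect A (exec c xs) e) = {b})"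
    if "sok c xs" "e \<notin> set xs" for xs
  proof -
    have ce: "cls_en (exec c xs) e" using persist_list[OF invc that en] .
    have r: "reach c (effect A (exec c xs) e)"
      using reach_trans[OF _ reach_step[OF ce]] that(1) unfolding reach_def by blast
    have R: "Rinit (effect A (exec c xs) e)" using Rinit_reach[OF Rc r] .
    have "val (effect A (exec c xs) e) \<noteq> UNIV" using H that by blast
    then show ?thesis using univalent[OF R] R ce by blast
  qed
  define U where "U xs = val (effect A (exec c xs) e)" for xs
  have step1: "\<exists>xs. sok c xs \<and> e \<notin> set xs \<and> U xs = {v}" for v
  proof -
    have "v \<in> val c" using bv by simp
    then obtain ys c' where ys: "sok c ys" "exec c ys = c'" and dc: "decv c' v"
      unfolding val_def reach_def by blast
    show ?thesis
    proof (cases "e \<in> set ys")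
      case True
      obtain ys1 ys2 where sp: "ys = ys1 @ e # ys2" "e \<notin> set ys1" using split_list_first[OF True] by blast
      have s1: "sok c ys1" using ys(1) sp by simp
      obtain b where b: "U ys1 = {b}" using good[OF s1 sp(2)] unfolding U_def by blast
      have "sok (effect A (exec c ys1) e) ys2 \<and> exec (effect A (exec c ys1) e) ys2 = c'"
        using ys sp by simp
      hence "reach (effect A (exec c ys1) e) c'" unfolding reach_def by blast
      hence "v \<in> U ys1" unfolding U_def val_def using dc by blast
      then show ?thesis using b s1 sp(2) by auto
    next
      case False
      obtain b where b: "U ys = {b}" using good[OF ys(1) False] unfolding U_def by blast
      have Rc': "Rinit c'" using Rinit_reach[OF Rc] ys unfolding reach_def by blast
      have ce: "cls_en c' e" using good[OF ys(1) False] ys(2) by simp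
      have "U ys \<subseteq> val c'" unfolding U_def using ys(2) val_mono[OF reach_step[OF ce]] by simp
      also have "\<dots> \<subseteq> {v}" using val_sub[OF Rc' dc] .
      finally show ?thesis using b ys(1) False by auto
    qed
  qed
  obtain b0 where b0: "U [] = {b0}" using good[of "[]"] unfolding U_def by auto
  obtain xs1 where xs1: "sok c xs1" "e \<notin> set xs1" "U xs1 = {\<not> b0}" using step1 by blast
  have walk: "\<exists>ys1 e' ys2. ys = ys1 @ e' # ys2 \<and> U ys1 \<noteq> U (ys1 @ [e'])"
    if "sok c ys" "e \<notin> set ys" "U ys \<noteq> U []" for ys
    using that
  proof (induction ys rule: rev_induct)
    case Nil then show ?case by simp
  next
    case (snoc x zs)
    have z: "sok c zs" "e \<notin> set zs" using snoc.prems by auto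
    show ?case
    proof (cases "U zs = U []")
      case True
      then show ?thesis using snoc.prems(3) by (intro exI[of _ zs] exI[of _ x] exI[of _ "[]"]) simp
    next
      case False
      then obtain ys1 e' ys2 where "zs = ys1 @ e' # ys2" "U ys1 \<noteq> U (ys1 @ [e'])" using snoc.IH[OF z] by blast
      then show ?thesis by (intro exI[of _ ys1] exI[of _ e'] exI[of _ "ys2 @ [x]"]) simp
    qed
  qed
  obtain ys1 e' ys2 where w: "xs1 = ys1 @ e' # ys2" "U ys1 \<noteq> U (ys1 @ [e'])"
    using walk[OF xs1(1,2)] xs1(3) b0 by auto
  have s1: "sok c ys1" and ce': "cls_en (exec c ys1) e'" using xs1(1) w(1) by auto
  have ne: "e \<notin> set ys1" "e' \<noteq> e" using xs1(2) w(1) by auto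
  have s2: "sok c (ys1 @ [e'])" using s1 ce' by simp
  have ne2: "e \<notin> set (ys1 @ [e'])" using ne by simp
  obtain b where b: "U ys1 = {b}" using good[OF s1 ne(1)] unfolding U_def by blast
  obtain b' where b': "U (ys1 @ [e']) = {b'}" using good[OF s2 ne2] unfolding U_def by blast
  have bb: "b \<noteq> b'" using w(2) b b' by auto
  define C0 where "C0 = exec c ys1"
  define C1 where "C1 = effect A C0 e'"
  have C1e: "exec c (ys1 @ [e']) = C1" by (simp add: C0_def C1_def)
  have RC0: "Rinit C0" using Rinit_reach[OF Rc] s1 unfolding reach_def C0_def by blast
  have iC0: "Inv C0" using Rinit_Inv[OF RC0] .
  have eC0: "cls_en C0 e" using good[OF s1 ne(1)] C0_def by simp
  have eC0': "cls_en C0 e'" using ce' C0_def by simp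
  have RC1: "Rinit C1" using Rinit_reach[OF RC0 reach_step[OF eC0']] C1_def by simp
  have iC1: "Inv C1" using Rinit_Inv[OF RC1] .
  have eC1: "cls_en C1 e" using good[OF s2 ne2] C1e by simp
  have vb: "val (effect A C0 e) = {b}" using b U_def C0_def by simp
  have vb': "val (effect A C1 e) = {b'}" using b' U_def C1e by simp
  show False
  proof (cases "same_agent e e'")
    case False
    have cm: "cls_en (effect A C0 e) e' \<and> effect A (effect A C0 e) e' = effect A (effect A C0 e') e"
      using comm[OF iC0 eC0 eC0' False] .
    hence "reach (effect A C0 e) (effect A C1 e)" using reach_step[of "effect A C0 e" e'] C1_def by simp
    then have "{b'} \<subseteq> {b}" using val_mono vb vb' by metis
    then show False using bb by simp
  next
    case True
    then consider (P) p i j where "e = PStep p i" "e' = PStep p j" | (O) k d k' d' where "e = ORespond k d" "e' = ORespond k' d'"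
      by (auto simp: same_agent_def)
    then show False
    proof cases
      case O
      then show False using oracle_unique[OF iC0 eC0[unfolded O(1)] eC0'[unfolded O(2)]] ne(2) by simp
    next
      case P
      obtain xs q w where xs: "sok C0 xs" "\<forall>x\<in>set xs. notp p x" "q \<in> {1..n}"
        "dec A q (st (exec C0 xs) q) = Some w"
        using crash_run[OF RC0, of p] by blast
      define Aa where "Aa = exec C0 xs"
      have nsa: "\<forall>x\<in>set xs. \<not> same_agent e x" "\<forall>x\<in>set xs. \<not> same_agent e' x"
        using xs(2) P by (auto simp: same_agent_def notp_def)
      have RAa: "Rinit Aa" using Rinit_reach[OF RC0] xs(1) unfolding reach_def Aa_def by blast
      have dAa: "decv Aa w" using xs(3,4) Aa_def decv_def by blast
      have vAa: "val Aa \<subseteq> {w}" using val_sub[OF RAa dAa] .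
      have cl1: "sok (effect A C0 e) xs \<and> cls_en Aa e \<and> exec (effect A C0 e) xs = effect A Aa e"
        using comm_list[OF iC0 xs(1) nsa(1) eC0] Aa_def by simp
      have r1: "reach (effect A C0 e) (effect A Aa e)" using cl1 unfolding reach_def by blast
      have r1': "reach Aa (effect A Aa e)" using reach_step cl1 by blast
      have R1: "Rinit (effect A Aa e)" using Rinit_reach[OF RAa r1'] .
      have "val (effect A Aa e) \<subseteq> {b}" using val_mono[OF r1] vb by simp
      moreover have "val (effect A Aa e) \<subseteq> {w}" using val_mono[OF r1'] vAa by simp
      moreover have "val (effect A Aa e) \<noteq> {}" using val_ne[OF R1] .
      ultimately have bw: "b = w" by blast
      have cl2: "sok C1 xs \<and> cls_en Aa e' \<and> exec C1 xs = effect A Aa e'"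
        using comm_list[OF iC0 xs(1) nsa(2) eC0'] Aa_def C1_def by simp
      have cl3: "sok (effect A C1 e) xs \<and> cls_en (exec C1 xs) e \<and> exec (effect A C1 e) xs = effect A (exec C1 xs) e"
        using comm_list[OF iC1 _ nsa(1) eC1] cl2 by simp
      define Z where "Z = effect A (effect A Aa e') e"
      have r2: "reach (effect A C1 e) Z" using cl3 cl2 unfolding reach_def Z_def by metis
      have r2': "reach Aa Z"
        using reach_trans[OF reach_step[of Aa e'] reach_step[of "effect A Aa e'" e]] cl2 cl3 Z_def by simp
      have R2: "Rinit Z" using Rinit_reach[OF RAa r2'] .
      have "val Z \<subseteq> {b'}" using val_mono[OF r2] vb' by simp
      moreover have "val Z \<subseteq> {w}" using val_mono[OF r2'] vAa by simp
      moreover have "val Z \<noteq> {}" using val_ne[OF R2] .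
      ultimately have "b' = w" by blast
      then show False using bw bb by simp
    qed
  qed
qed

end


context flp begin

theorem main_false: False
proof -
  obtain V where V: "val (init_cfg A V) = UNIV" using init_bival by blast
  define I where "I c \<longleftrightarrow> Rinit c \<and> val c = UNIV" for c
  define Y where "Y c e = (SOME ys. sok c ys \<and> e \<notin> set ys \<and> val (effect A (exec c ys) e) = UNIV)" for c e
  define X where "X c e = Y c e @ [e]" for c e
  have HX: "sok c (X c e) \<and> (\<forall>e'\<in>set (X c e). okP L e') \<and> I (exec c (X c e)) \<and> X c e \<noteq> [] \<and> last (X c e) = e"
    if "Inv c" "I c" "cls_en c e" "okP L e" for c e
  proof -
    have Rc: "Rinit c" and bv: "val c = UNIV" using that(2) I_def by auto
    have ex: "\<exists>ys. sok c ys \<and> e \<notin> set ys \<and> val (effect A (exec c ys) e) = UNIV"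
      using bival_step[OF Rc bv that(3)] .
    have y: "sok c (Y c e) \<and> e \<notin> set (Y c e) \<and> val (effect A (exec c (Y c e)) e) = UNIV"
      unfolding Y_def by (rule someI_ex[OF ex])
    have ce: "cls_en (exec c (Y c e)) e" using persist_list[OF that(1)] y that(3) by blast
    have s: "sok c (X c e)" using y ce X_def by simp
    have ok: "\<forall>e'\<in>set (X c e). okP L e'"
    proof
      fix e' assume "e' \<in> set (X c e)"
      then show "okP L e'" using sok_okL[OF s] unfolding okP_def by blast
    qed
    have r: "reach c (exec c (X c e))" using s unfolding reach_def by blast
    have "I (exec c (X c e))" using Rinit_reach[OF Rc r] y X_def I_def by simp
    then show ?thesis using s ok X_def by simp
  qed
  have Ri: "Rinit (init_cfg A V)" unfolding Rinit_def by (intro exI[of _ V] exI[of _ "[]"]) simp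
  interpret R: runctx A nL n f V "[]" L X I
    by (rule mk_runctx) (use HX Ri V I_def in auto)
  have oneL: "1 \<in> L" using nL_pos by simp
  obtain t where t: "dec A 1 (st (R.rho t) 1) \<noteq> None" using R.sol[THEN conjunct1] oneL by blast
  then obtain d where d: "dec A 1 (st (R.rho t) 1) = Some d" by blast
  have dv: "decv (R.rho t) d" unfolding decv_def using d n_pos by auto
  obtain t0 c where b: "t \<le> 0 + t0" "R.S t0 = (c, [], [])" "R.rho (0 + t0) = c"
    using R.boundary[of t] by auto
  have Ic: "I c" using R.I_boundary[OF b(2)] .
  have sg0: "sok (R.rho 0) (map R.E [0..<t]) \<and> exec (R.rho 0) (map R.E [0..<t]) = R.rho t"
    using R.seg[of 0 t] by simp
  have Rt: "Rinit (R.rho t)" using sg0 R.rho_0 unfolding Rinit_def by metis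
  have sg: "sok (R.rho t) (map R.E [t..<t0]) \<and> exec (R.rho t) (map R.E [t..<t0]) = R.rho t0"
    using R.seg[of t t0] b(1) by simp
  have "reach (R.rho t) c" using sg b(3) unfolding reach_def by auto
  then have "val c \<subseteq> {d}" using val_mono val_sub[OF Rt dv] by blast
  then show False using Ic I_def by auto
qed

end

theorem mainTheorem16:
  fixes n f :: nat
  assumes "1 \<le> f" and "f \<le> n - 1"
  shows "\<not> C_reducible_Cons_Cons_succ TYPE('s) TYPE('m) n f"
proof
  assume "C_reducible_Cons_Cons_succ TYPE('s) TYPE('m) n f"
  then obtain A :: "('s, 'm) algo" where A: "solves_Cons_with_oracle A n f (n + 1) f"
    unfolding C_reducible_Cons_Cons_succ_def by blast
  interpret flp A "n + 1 - f" n f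
    by (intro flp.intro sys.intro flp_axioms.intro) (use assms A in auto)
  show False by (rule main_false)
qed


end
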